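(* Let $f:\mathbb{R}^n\times\mathbb{R}^m\to\mathbb{R}^n$ be smooth with $f(0,0)=0$, and suppose $f$ is affine in the input, i.e. $f(x,u)=f_0(x)+g(x)u$ for smooth $f_0:\mathbb{R}^n\to\mathbb{R}^n$ and $g:\mathbb{R}^n\to\mathbb{R}^{n\times m}$. Let $X\subset\mathbb{R}^n$, $U\subset\mathbb{R}^m$, $P\subset\mathbb{R}^n$ be bounded open sets containing the origin, with $U$ convex, and suppose there is $\bar h>0$ such that for every $x_0\in X$ and $u_0\in U$ the initial-value problem $\dot x(t)=f(x(t),u_0)$, $x(0)=x_0$, has a unique solution $\phi(t;x_0,u_0)$ on $0\le t\le \bar h$. Let $Q\in\mathbb{R}^{n\times n}$ be positive semidefinite and $R\in\mathbb{R}^{m\times m}$ positive definite. For a sampling period $h\in(0,\bar h]$ define the Hamiltonian $$H(x,u,p^+)=\phi(h;x,u)^{\mathrm T}p^+ + h\,x^{\mathrm T}Qx + h\,u^{\mathrm T}Ru .$$ Then for all sufficiently small $h>0$, the function $u\mapsto H(x,u,p^+)$ is convex on $U$ for every $(x,p^+)\in X\times P$.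
   Context: $\phi(t;x_0,u_0)$ denotes the state at time $t$ of the plant $\dot x=f(x,u)$ started at $x_0$ with the input held constant at $u_0$ (it is smooth in $(t,x_0,u_0)$). This Hamiltonian arises from the sampled-data optimal control problem of minimizing $\sum_{k\ge0}(h x[k]^{\mathrm T}Qx[k]+h u[k]^{\mathrm T}Ru[k])$ subject to $x[k+1]=\phi(h;x[k],u[k])$. *)

theory Defs
  imports "HOL-Analysis.Analysis"
begin

text \<open>Iterated directional (Frechet) derivatives: dderiv [v1,...,vk] f x = D^k f(x)(v1,...,vk).\<close>
fun dderiv :: "'a::real_normed_vector list \<Rightarrow> ('a \<Rightarrow> 'b::real_normed_vector) \<Rightarrow> 'a \<Rightarrow> 'b" where
  "dderiv [] f = f"
| "dderiv (v # vs) f = (\<lambda>x. frechet_derivative (dderiv vs f) (at x) v)"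

text \<open>C-infinity on an open set: all iterated derivatives exist (Frechet differentiable) on S.
  Continuity of every derivative follows from differentiability of the next one.\<close>
definition smooth_on :: "'a::real_normed_vector set \<Rightarrow> ('a \<Rightarrow> 'b::real_normed_vector) \<Rightarrow> bool" where
  "smooth_on S f \<longleftrightarrow> open S \<and> (\<forall>vs. \<forall>x\<in>S. dderiv vs f differentiable (at x))"

definition psd_matrix :: "real^'n^'n \<Rightarrow> bool" where
  "psd_matrix Q \<longleftrightarrow> transpose Q = Q \<and> (\<forall>x. 0 \<le> x \<bullet> (Q *v x))"

definition pd_matrix :: "real^'n^'n \<Rightarrow> bool" where
  "pd_matrix R \<longleftrightarrow> transpose R = R \<and> (\<forall>x. x \<noteq> 0 \<longrightarrow> 0 < x \<bullet> (R *v x))"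

definition hamiltonian ::
  "(real \<Rightarrow> real^'n \<Rightarrow> real^'m \<Rightarrow> real^'n) \<Rightarrow> real^'n^'n \<Rightarrow> real^'m^'m \<Rightarrow> real
    \<Rightarrow> real^'n \<Rightarrow> real^'m \<Rightarrow> real^'n \<Rightarrow> real" where
  "hamiltonian phi Q R h x u p = phi h x u \<bullet> p + h * (x \<bullet> (Q *v x)) + h * (u \<bullet> (R *v u))"

end

theory Submission
  imports Defs
begin


lemma linear_norm_le_basis_sum:
  fixes f :: "'a::euclidean_space \<Rightarrow> 'b::real_normed_vector"
  assumes "linear f"
  shows "norm (f w) \<le> (\<Sum>b\<in>Basis. norm (f b)) * norm w"
proof -
  have "f w = f (\<Sum>b\<in>Basis. (w \<bullet> b) *\<^sub>R b)" by (simp add: euclidean_representation)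
  also have "\<dots> = (\<Sum>b\<in>Basis. (w \<bullet> b) *\<^sub>R f b)"
    using assms by (simp add: linear_sum linear_scale)
  finally have "norm (f w) \<le> (\<Sum>b\<in>Basis. norm ((w \<bullet> b) *\<^sub>R f b))"
    by (metis norm_sum)
  also have "\<dots> \<le> (\<Sum>b\<in>Basis. norm w * norm (f b))"
    by (rule sum_mono) (auto intro!: mult_right_mono Basis_le_norm)
  finally show ?thesis by (simp add: sum_distrib_left mult.commute)
qed

lemma cont_bounded_on:
  fixes h :: "'a::metric_space \<Rightarrow> 'b::real_normed_vector"
  assumes "compact K" "continuous_on K h"
  shows "\<exists>M. \<forall>x\<in>K. norm (h x) \<le> M"
proof -
  have "bounded (h ` K)" using assms compact_continuous_image compact_imp_bounded by blast
  then show ?thesis by (auto simp: bounded_iff)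
qed

lemma lip_from_deriv:
  fixes G :: "'a::euclidean_space \<Rightarrow> 'b::real_normed_vector"
  assumes diff: "\<And>x. G differentiable (at x)"
    and cont: "\<And>w x. isCont (\<lambda>x. frechet_derivative G (at x) w) x"
    and K: "compact K" "convex K"
  shows "\<exists>L. \<forall>a\<in>K. \<forall>b\<in>K. norm (G a - G b) \<le> L * norm (a - b)"
proof -
  have "\<forall>b\<in>Basis. \<exists>M. \<forall>x\<in>K. norm (frechet_derivative G (at x) b) \<le> M"
    using K cont by (intro ballI cont_bounded_on) (auto intro!: continuous_at_imp_continuous_on)
  then obtain M where M: "\<And>b x. b\<in>Basis \<Longrightarrow> x\<in>K \<Longrightarrow> norm (frechet_derivative G (at x) b) \<le> M b"
    by metis
  show ?thesis
  proof (intro exI ballI)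
    fix a b assume ab: "a \<in> K" "b \<in> K"
    show "norm (G a - G b) \<le> (\<Sum>c\<in>Basis. M c) * norm (a - b)"
    proof (rule differentiable_bound[OF K(2) _ _ ab])
      fix x assume "x \<in> K"
      show "(G has_derivative frechet_derivative G (at x)) (at x within K)"
        using diff frechet_derivative_works has_derivative_at_withinI by blast
      have lin: "linear (frechet_derivative G (at x))"
        using diff linear_frechet_derivative by blast
      show "onorm (frechet_derivative G (at x)) \<le> (\<Sum>c\<in>Basis. M c)"
      proof (rule onorm_le)
        fix w
        have "norm (frechet_derivative G (at x) w) \<le> (\<Sum>c\<in>Basis. norm (frechet_derivative G (at x) c)) * norm w"
          by (rule linear_norm_le_basis_sum[OF lin])
        also have "\<dots> \<le> (\<Sum>c\<in>Basis. M c) * norm w"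
          by (intro mult_right_mono sum_mono M \<open>x\<in>K\<close>) auto
        finally show "norm (frechet_derivative G (at x) w) \<le> (\<Sum>c\<in>Basis. M c) * norm w" .
      qed
    qed
  qed
qed

lemma defect_bound:
  fixes F :: "'a::real_normed_vector \<Rightarrow> 'b::real_normed_vector"
  assumes der: "\<And>x. (F has_derivative DF x) (at x)"
    and lipD: "\<And>p q v. p \<in> K \<Longrightarrow> q \<in> K \<Longrightarrow> norm (DF p v - DF q v) \<le> L * norm (p - q) * norm v"
    and L0: "0 \<le> L" and K: "convex K" and a: "a \<in> K" and b: "b \<in> K" and t: "0 \<le> t" "t \<le> 1"
  shows "norm (F (a + t *\<^sub>R (b - a)) - (1 - t) *\<^sub>R F a - t *\<^sub>R F b) \<le> L * t * (1 - t) * (norm (b - a))^2"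
proof -
  define c where "c = a + t *\<^sub>R (b - a)"
  define V where "V = DF c (b - a)"
  define \<psi> where "\<psi> = (\<lambda>s. F (a + s *\<^sub>R (b - a)) - s *\<^sub>R V)"
  have inK: "a + s *\<^sub>R (b - a) \<in> K" if "0 \<le> s" "s \<le> 1" for s
  proof -
    have "a + s *\<^sub>R (b - a) = (1 - s) *\<^sub>R a + s *\<^sub>R b" by (simp add: algebra_simps)
    then show ?thesis using K a b that by (simp add: convex_def)
  qed
  have cK: "c \<in> K" using inK t c_def by auto
  have lin: "linear (DF x)" for x using der has_derivative_linear by blast
  have dpsi: "(\<psi> has_derivative (\<lambda>r. r *\<^sub>R (DF (a + s *\<^sub>R (b - a)) (b - a) - V))) (at s within S)" for s S
  proof -
    have 1: "((\<lambda>s. a + s *\<^sub>R (b - a)) has_derivative (\<lambda>r. r *\<^sub>R (b - a))) (at s within S)"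
      by (auto intro!: derivative_eq_intros)
    have 2: "((\<lambda>s. F (a + s *\<^sub>R (b - a))) has_derivative (\<lambda>r. DF (a + s *\<^sub>R (b - a)) (r *\<^sub>R (b - a)))) (at s within S)"
      using has_derivative_compose[OF 1 der[THEN has_derivative_at_withinI]] 
      by (simp add: o_def)
    have 3: "(\<lambda>r. DF (a + s *\<^sub>R (b - a)) (r *\<^sub>R (b - a))) = (\<lambda>r. r *\<^sub>R DF (a + s *\<^sub>R (b - a)) (b - a))"
      using lin by (simp add: linear_scale)
    show ?thesis unfolding \<psi>_def
      using has_derivative_diff[OF 2[unfolded 3] has_derivative_scaleR_left[OF has_derivative_ident, of V]]
      by (simp add: algebra_simps)
  qed
  have on: "onorm (\<lambda>r::real. r *\<^sub>R W) = norm W" for W :: 'b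
    using onorm_scaleR_left[OF bounded_linear_ident, of W] by (simp add: onorm_id)
  have Wb: "norm (DF (a + s *\<^sub>R (b - a)) (b - a) - V) \<le> L * \<bar>s - t\<bar> * (norm (b - a))^2"
    if "0 \<le> s" "s \<le> 1" for s
  proof -
    have "norm (DF (a + s *\<^sub>R (b - a)) (b - a) - V) \<le> L * norm ((a + s *\<^sub>R (b - a)) - c) * norm (b - a)"
      unfolding V_def by (rule lipD[OF inK[OF that] cK])
    also have "(a + s *\<^sub>R (b - a)) - c = (s - t) *\<^sub>R (b - a)" by (simp add: c_def algebra_simps)
    finally show ?thesis by (simp add: power2_eq_square mult.assoc)
  qed
  have B1: "norm (\<psi> t - \<psi> 0) \<le> (L * t * (norm (b - a))^2) * norm (t - 0)"
  proof (rule differentiable_bound[of "{0..t}"])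
    show "convex {0..t}" by simp
    show "(\<psi> has_derivative (\<lambda>r. r *\<^sub>R (DF (a + s *\<^sub>R (b - a)) (b - a) - V))) (at s within {0..t})" for s
      by (rule dpsi)
    fix s assume s: "s \<in> {0..t}"
    then have "L * \<bar>s - t\<bar> * (norm (b - a))^2 \<le> L * t * (norm (b - a))^2"
      using L0 by (intro mult_right_mono mult_left_mono) auto
    then show "onorm (\<lambda>r. r *\<^sub>R (DF (a + s *\<^sub>R (b - a)) (b - a) - V)) \<le> L * t * (norm (b - a))^2"
      unfolding on using Wb[of s] s t by auto
  qed (use t in auto)
  have B2: "norm (\<psi> 1 - \<psi> t) \<le> (L * (1 - t) * (norm (b - a))^2) * norm (1 - t)"
  proof (rule differentiable_bound[of "{t..1}"])
    show "convex {t..1}" by simp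
    show "(\<psi> has_derivative (\<lambda>r. r *\<^sub>R (DF (a + s *\<^sub>R (b - a)) (b - a) - V))) (at s within {t..1})" for s
      by (rule dpsi)
    fix s assume s: "s \<in> {t..1}"
    then have "L * \<bar>s - t\<bar> * (norm (b - a))^2 \<le> L * (1 - t) * (norm (b - a))^2"
      using L0 by (intro mult_right_mono mult_left_mono) auto
    then show "onorm (\<lambda>r. r *\<^sub>R (DF (a + s *\<^sub>R (b - a)) (b - a) - V)) \<le> L * (1 - t) * (norm (b - a))^2"
      unfolding on using Wb[of s] s t by auto
  qed (use t in auto)
  have eq: "F (a + t *\<^sub>R (b - a)) - (1 - t) *\<^sub>R F a - t *\<^sub>R F b = (1 - t) *\<^sub>R (\<psi> t - \<psi> 0) - t *\<^sub>R (\<psi> 1 - \<psi> t)"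
    by (simp add: \<psi>_def algebra_simps)
  have "norm ((1 - t) *\<^sub>R (\<psi> t - \<psi> 0) - t *\<^sub>R (\<psi> 1 - \<psi> t)) \<le> (1 - t) * norm (\<psi> t - \<psi> 0) + t * norm (\<psi> 1 - \<psi> t)"
    using t by (metis (no_types, opaque_lifting) abs_of_nonneg diff_ge_0_iff_ge norm_scaleR norm_triangle_ineq4 order.trans)
  also have "\<dots> \<le> (1 - t) * ((L * t * (norm (b - a))^2) * t) + t * ((L * (1 - t) * (norm (b - a))^2) * (1 - t))"
    using B1 B2 t by (intro add_mono mult_left_mono) auto
  also have "\<dots> = L * t * (1 - t) * (norm (b - a))^2" by (simp add: algebra_simps)
  finally show ?thesis using eq by simp
qed

lemma smooth_C2:
  fixes F :: "'a::euclidean_space \<Rightarrow> 'b::real_normed_vector"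
  assumes sm: "smooth_on UNIV F" and K: "compact K" "convex K"
  shows "\<exists>L\<ge>0. (\<forall>a\<in>K. norm (F a) \<le> L) \<and> (\<forall>a\<in>K. \<forall>b\<in>K. norm (F a - F b) \<le> L * norm (a - b)) \<and>
    (\<forall>a\<in>K. \<forall>b\<in>K. \<forall>t. 0 \<le> t \<and> t \<le> 1 \<longrightarrow>
       norm (F (a + t *\<^sub>R (b - a)) - (1 - t) *\<^sub>R F a - t *\<^sub>R F b) \<le> L * t * (1 - t) * (norm (b - a))^2)"
proof -
  have sm': "\<And>vs x. dderiv vs F differentiable (at x)" using sm by (simp add: smooth_on_def)
  have d0: "F differentiable (at x)" for x using sm'[of "[]"] by simp
  have der: "(F has_derivative frechet_derivative F (at x)) (at x)" for x
    using d0 frechet_derivative_works by blast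
  have lin: "linear (frechet_derivative F (at x))" for x using d0 linear_frechet_derivative by blast
  have cont1: "isCont (\<lambda>x. frechet_derivative F (at x) w) x" for w x
    using sm'[of "[w]" x] by (simp add: differentiable_imp_continuous_within)
  obtain L1 where L1: "\<And>a b. a\<in>K \<Longrightarrow> b\<in>K \<Longrightarrow> norm (F a - F b) \<le> L1 * norm (a - b)"
    using lip_from_deriv[OF d0 cont1 K] by blast
  have "\<forall>c\<in>Basis. \<exists>L. \<forall>a\<in>K. \<forall>b\<in>K. norm (dderiv [c] F a - dderiv [c] F b) \<le> L * norm (a - b)"
  proof
    fix c :: 'a
    show "\<exists>L. \<forall>a\<in>K. \<forall>b\<in>K. norm (dderiv [c] F a - dderiv [c] F b) \<le> L * norm (a - b)"
    proof (rule lip_from_deriv[OF _ _ K])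
      show "dderiv [c] F differentiable (at x)" for x by (rule sm')
      show "isCont (\<lambda>x. frechet_derivative (dderiv [c] F) (at x) w) x" for w x
        using sm'[of "[w, c]" x] by (simp add: differentiable_imp_continuous_within)
    qed
  qed
  then obtain Lc where Lc: "\<And>c a b. c\<in>Basis \<Longrightarrow> a\<in>K \<Longrightarrow> b\<in>K \<Longrightarrow>
      norm (frechet_derivative F (at a) c - frechet_derivative F (at b) c) \<le> Lc c * norm (a - b)"
    by simp metis
  define L2 where "L2 = (\<Sum>c\<in>Basis. Lc c)"
  have lipD: "norm (frechet_derivative F (at p) v - frechet_derivative F (at q) v) \<le> L2 * norm (p - q) * norm v"
    if "p \<in> K" "q \<in> K" for p q v
  proof -
    have "linear (\<lambda>v. frechet_derivative F (at p) v - frechet_derivative F (at q) v)"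
      using lin by (intro linear_compose_sub) auto
    from linear_norm_le_basis_sum[OF this, of v]
    have "norm (frechet_derivative F (at p) v - frechet_derivative F (at q) v)
       \<le> (\<Sum>c\<in>Basis. norm (frechet_derivative F (at p) c - frechet_derivative F (at q) c)) * norm v" .
    also have "\<dots> \<le> (\<Sum>c\<in>Basis. Lc c * norm (p - q)) * norm v"
      by (intro mult_right_mono sum_mono Lc that) auto
    finally show ?thesis by (simp add: L2_def sum_distrib_right)
  qed
  have "continuous_on K F" using d0
    by (meson continuous_at_imp_continuous_on differentiable_imp_continuous_within)
  then obtain M where M: "\<And>a. a\<in>K \<Longrightarrow> norm (F a) \<le> M" using cont_bounded_on[OF K(1)] by blast
  define L where "L = max 0 (max M (max L1 L2))"
  show ?thesis
  proof (intro exI conjI ballI allI impI)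
    show "0 \<le> L" by (simp add: L_def)
    show "norm (F a) \<le> L" if "a \<in> K" for a using M[OF that] by (simp add: L_def)
    show "norm (F a - F b) \<le> L * norm (a - b)" if "a \<in> K" "b \<in> K" for a b
      using L1[OF that] by (smt (verit) L_def mult_right_mono norm_ge_zero)
    fix a b and t :: real assume ab: "a \<in> K" "b \<in> K" and t: "0 \<le> t \<and> t \<le> 1"
    have "norm (frechet_derivative F (at p) v - frechet_derivative F (at q) v) \<le> L * norm (p - q) * norm v"
      if "p \<in> K" "q \<in> K" for p q v
      using lipD[OF that, of v] by (smt (verit) L_def mult_right_mono norm_ge_zero zero_le_mult_iff)
    from defect_bound[OF der this _ K(2) ab, of t] t
    show "norm (F (a + t *\<^sub>R (b - a)) - (1 - t) *\<^sub>R F a - t *\<^sub>R F b) \<le> L * t * (1 - t) * (norm (b - a))^2"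
      by (simp add: L_def)
  qed
qed

lemma small_bound:
  fixes z :: "real \<Rightarrow> 'a::real_normed_vector"
  assumes h: "0 < h" and der: "\<And>s. s\<in>{0..h} \<Longrightarrow> (z has_vector_derivative z' s) (at s within {0..h})"
    and z0: "z 0 = 0" and bnd: "\<And>s. s\<in>{0..h} \<Longrightarrow> norm (z' s) \<le> A * norm (z s) + C"
    and A: "0 \<le> A" "A * h \<le> 1/2" and s: "s \<in> {0..h}"
  shows "norm (z s) \<le> 2 * h * C"
proof -
  have "continuous_on {0..h} z"
    using der by (meson continuous_on_eq_continuous_within has_vector_derivative_continuous)
  then have "continuous_on {0..h} (\<lambda>s. norm (z s))" by (intro continuous_intros)
  then obtain s0 where s0: "s0 \<in> {0..h}" and mx: "\<And>s. s \<in> {0..h} \<Longrightarrow> norm (z s) \<le> norm (z s0)"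
    using continuous_attains_sup[of "{0..h}" "\<lambda>s. norm (z s)"] h by auto
  define m where "m = norm (z s0)"
  have on: "onorm (\<lambda>r::real. r *\<^sub>R W) = norm W" for W :: 'a
    using onorm_scaleR_left[OF bounded_linear_ident, of W] by (simp add: onorm_id)
  have "norm (z s0 - z 0) \<le> (A * m + C) * norm (s0 - 0)"
  proof (rule differentiable_bound[of "{0..h}"])
    show "(z has_derivative (\<lambda>r. r *\<^sub>R z' x)) (at x within {0..h})" if "x \<in> {0..h}" for x
      using der[OF that] by (simp add: has_vector_derivative_def)
    show "onorm (\<lambda>r. r *\<^sub>R z' x) \<le> A * m + C" if "x \<in> {0..h}" for x
      unfolding on using bnd[OF that] mx[OF that] A m_def
      by (smt (verit) mult_left_mono)
  qed (use s0 h in auto)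
  moreover have "0 \<le> A * m + C" using bnd[OF s0] unfolding m_def by (smt (verit) norm_ge_zero)
  ultimately have "m \<le> (A * m + C) * h" using s0 z0 unfolding m_def
    by (smt (verit) atLeastAtMost_iff mult_left_mono real_norm_def diff_zero abs_of_nonneg)
  then have "m \<le> A * h * m + C * h" by (simp add: algebra_simps)
  moreover have "A * h * m \<le> 1/2 * m" using A m_def by (intro mult_right_mono) auto
  ultimately have "m \<le> 2 * h * C" by (simp add: algebra_simps)
  then show ?thesis using mx[OF s] m_def by simp
qed

lemma stay_close:
  fixes y :: "real \<Rightarrow> 'a::real_inner"
  assumes T: "0 \<le> T" and der: "\<And>s. s\<in>{0..T} \<Longrightarrow> (y has_vector_derivative F s) (at s within {0..T})"
    and bnd: "\<And>s. s\<in>{0..T} \<Longrightarrow> norm (y s - y 0) \<le> 1 \<Longrightarrow> norm (F s) \<le> M"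
    and MT: "M * T < 1" and s: "s \<in> {0..T}"
  shows "norm (y s - y 0) \<le> 1"
proof (rule ccontr)
  assume ns: "\<not> norm (y s - y 0) \<le> 1"
  have cont: "continuous_on {0..T} y"
    using der by (meson continuous_on_eq_continuous_within has_vector_derivative_continuous)
  then have contn: "continuous_on {0..T} (\<lambda>s. norm (y s - y 0))" by (intro continuous_intros)
  define Z where "Z = {0..T} \<inter> (\<lambda>s. norm (y s - y 0)) -` {1..}"
  have "closed Z" unfolding Z_def by (rule continuous_closed_preimage[OF contn]) auto
  then have "compact Z" unfolding Z_def by (metis compact_eq_bounded_closed bounded_Int bounded_closed_interval)
  moreover have "Z \<noteq> {}" using s ns unfolding Z_def by auto
  ultimately obtain s1 where s1: "s1 \<in> Z" and mn: "\<And>s. s \<in> Z \<Longrightarrow> s1 \<le> s"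
    using continuous_attains_inf[of Z "\<lambda>s. s"] by auto
  have s1T: "0 \<le> s1" "s1 \<le> T" and n1: "1 \<le> norm (y s1 - y 0)" using s1 by (auto simp: Z_def)
  have pos: "0 < s1" using n1 s1T by (cases "s1 = 0") auto
  have lt: "norm (y \<sigma> - y 0) < 1" if "0 \<le> \<sigma>" "\<sigma> < s1" for \<sigma>
    using mn[of \<sigma>] that s1T by (force simp: Z_def)
  obtain \<xi> where \<xi>: "\<xi> \<in> {0<..<s1}" and ineq: "norm (y s1 - y 0) \<le> norm ((s1 - 0) *\<^sub>R F \<xi>)"
  proof -
    have "\<exists>x\<in>{0<..<s1}. norm (y s1 - y 0) \<le> norm ((\<lambda>r. r *\<^sub>R F x) (s1 - 0))"
    proof (rule mvt_general[OF pos])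
      show "continuous_on {0..s1} y" using cont s1T by (auto intro: continuous_on_subset)
      fix x assume x: "0 < x" "x < s1"
      then have "(y has_vector_derivative F x) (at x within {0..T})" using der s1T by auto
      then show "(y has_derivative (\<lambda>r. r *\<^sub>R F x)) (at x)"
        using x s1T by (simp add: has_vector_derivative_def at_within_Icc_at)
    qed
    then show ?thesis using that by auto
  qed
  have "norm (F \<xi>) \<le> M" using \<xi> s1T lt[of \<xi>] by (intro bnd) auto
  then have "norm ((s1 - 0) *\<^sub>R F \<xi>) \<le> T * M"
    using s1T by (simp) (smt (verit) mult_mono norm_ge_zero)
  then show False using ineq n1 MT by (simp add: mult.commute)
qed

lemma mat_vec_norm:
  fixes A :: "real^'m^'n"
  shows "norm (A *v x) \<le> real CARD('n) * real CARD('m) * norm A * norm x"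
proof -
  have "onorm ((*v) A) \<le> real CARD('n) * real CARD('m) * norm A"
  proof (rule onorm_le_matrix_component)
    fix i j
    have "\<bar>A $ i $ j\<bar> \<le> norm (A $ i)" by (rule component_le_norm_cart)
    also have "\<dots> \<le> norm A" by (rule Finite_Cartesian_Product.norm_nth_le)
    finally show "\<bar>A $ i $ j\<bar> \<le> norm A" .
  qed
  then have "onorm ((*v) A) * norm x \<le> real CARD('n) * real CARD('m) * norm A * norm x"
    by (rule mult_right_mono) simp
  moreover have "norm (A *v x) \<le> onorm ((*v) A) * norm x"
    by (rule onorm[OF matrix_vector_mul_bounded_linear])
  ultimately show ?thesis by linarith
qed

lemma pd_lower:
  fixes R :: "real^'m^'m"
  assumes "pd_matrix R"
  shows "\<exists>l>0. \<forall>z. l * (norm z)^2 \<le> z \<bullet> (R *v z)"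
proof -
  have pos: "\<And>z. z \<noteq> 0 \<Longrightarrow> 0 < z \<bullet> (R *v z)" using assms by (simp add: pd_matrix_def)
  have "continuous_on (sphere 0 1) (\<lambda>z::real^'m. z \<bullet> (R *v z))"
    by (intro continuous_intros linear_continuous_on matrix_vector_mul_bounded_linear)
  moreover have "sphere (0::real^'m) 1 \<noteq> {}" by simp
  ultimately obtain z0 where z0: "z0 \<in> sphere 0 1" and mn: "\<And>z. z \<in> sphere 0 1 \<Longrightarrow> z0 \<bullet> (R *v z0) \<le> z \<bullet> (R *v z)"
    using continuous_attains_inf[of "sphere 0 1" "\<lambda>z::real^'m. z \<bullet> (R *v z)"] by auto
  define l where "l = z0 \<bullet> (R *v z0)"
  have "z0 \<noteq> 0" using z0 by auto
  then have lpos: "0 < l" using pos unfolding l_def by blast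
  show ?thesis
  proof (intro exI conjI allI)
    show "0 < l" by (rule lpos)
    fix z :: "real^'m"
    show "l * (norm z)^2 \<le> z \<bullet> (R *v z)"
    proof (cases "z = 0")
      case True then show ?thesis by simp
    next
      case False
      define w where "w = (1 / norm z) *\<^sub>R z"
      have "w \<in> sphere 0 1" using False by (simp add: w_def)
      then have "l \<le> w \<bullet> (R *v w)" using mn l_def by auto
      also have "w \<bullet> (R *v w) = (z \<bullet> (R *v z)) / (norm z)^2"
        by (simp add: w_def matrix_vector_mult_scaleR power2_eq_square)
      finally show ?thesis using False by (simp add: field_simps)
    qed
  qed
qed

lemma decomp_identity:
  fixes Fw Fb F1 F2 :: "real^'n" and Gw Gb G1 G2 :: "real^'m^'n" and u1 u2 :: "real^'m"
  assumes ab: "a + b = 1"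
  shows "Fw + Gw *v (a *\<^sub>R u1 + b *\<^sub>R u2) - a *\<^sub>R (F1 + G1 *v u1) - b *\<^sub>R (F2 + G2 *v u2)
    = (Fw - Fb) + (Fb - a *\<^sub>R F1 - b *\<^sub>R F2) + (Gw - Gb) *v (a *\<^sub>R u1 + b *\<^sub>R u2)
      + (Gb - a *\<^sub>R G1 - b *\<^sub>R G2) *v (a *\<^sub>R u1 + b *\<^sub>R u2) + (a * b) *\<^sub>R ((G2 - G1) *v (u1 - u2))"
proof -
  have b: "b = 1 - a" using ab by simp
  show ?thesis unfolding b
    by (simp add: matrix_vector_mult_diff_rdistrib matrix_vector_mult_add_rdistrib
        matrix_vector_right_distrib matrix_vector_mult_diff_distrib scaleR_matrix_vector_assoc
        matrix_vector_mult_scaleR algebra_simps)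
qed

lemma quad_identity:
  fixes R :: "real^'m^'m" and u1 u2 :: "real^'m"
  assumes ab: "a + b = 1"
  shows "(a *\<^sub>R u1 + b *\<^sub>R u2) \<bullet> (R *v (a *\<^sub>R u1 + b *\<^sub>R u2))
     = a * (u1 \<bullet> (R *v u1)) + b * (u2 \<bullet> (R *v u2)) - a * b * ((u1 - u2) \<bullet> (R *v (u1 - u2)))"
proof -
  have b: "b = 1 - a" using ab by simp
  show ?thesis unfolding b
    by (simp add: matrix_vector_right_distrib matrix_vector_mult_diff_distrib
        matrix_vector_mult_scaleR inner_add_left inner_add_right inner_diff_left inner_diff_right algebra_simps power2_eq_square)
qed

lemma mv_bound:
  fixes M :: "real^'m^'n"
  assumes "norm (M *v v) \<le> k * norm M * norm v" "norm M \<le> N" "norm v \<le> r" "0 \<le> k"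
  shows "norm (M *v v) \<le> k * N * r"
proof -
  have "k * norm M \<le> k * N" using assms by (intro mult_left_mono) auto
  then have "k * norm M * norm v \<le> k * N * norm v" by (intro mult_right_mono) auto
  moreover have "0 \<le> k * N" using assms by (meson norm_ge_zero order_trans mult_nonneg_nonneg)
  then have "k * N * norm v \<le> k * N * r" using assms by (intro mult_left_mono) auto
  ultimately show ?thesis using assms(1) by linarith
qed

lemma hvd_cmul:
  assumes "(g has_vector_derivative g') F"
  shows "((\<lambda>x. c *\<^sub>R g x) has_vector_derivative c *\<^sub>R g') F"
proof -
  have "((\<lambda>x. c *\<^sub>R g x) has_derivative (\<lambda>h. c *\<^sub>R (h *\<^sub>R g'))) F"
    using assms unfolding has_vector_derivative_def by (rule has_derivative_scaleR_right)
  then show ?thesis unfolding has_vector_derivative_def by (simp add: mult.commute)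
qed

lemma norm_add3:
  fixes a b c :: "'a::real_normed_vector"
  shows "norm (a + b + c) \<le> norm a + norm b + norm c"
  using norm_triangle_ineq[of "a+b" c] norm_triangle_ineq[of a b] by linarith

lemma norm_add5:
  fixes a b c d e :: "'a::real_normed_vector"
  shows "norm (a + b + c + d + e) \<le> norm a + norm b + norm c + norm d + norm e"
  using norm_triangle_ineq[of "a+b+c+d" e] norm_triangle_ineq[of "a+b+c" d]
    norm_triangle_ineq[of "a+b" c] norm_triangle_ineq[of a b] by linarith

theorem proposition3:
  fixes f :: "real^'n \<Rightarrow> real^'m \<Rightarrow> real^'n"
    and f0 :: "real^'n \<Rightarrow> real^'n"
    and g :: "real^'n \<Rightarrow> real^'m^'n"
    and phi :: "real \<Rightarrow> real^'n \<Rightarrow> real^'m \<Rightarrow> real^'n"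
    and X P :: "(real^'n) set" and U :: "(real^'m) set"
    and Q :: "real^'n^'n" and R :: "real^'m^'m"
    and hbar :: real
  assumes f_smooth: "smooth_on UNIV (\<lambda>(x, u). f x u)"
    and f_zero: "f 0 0 = 0"
    and f_affine: "\<And>x u. f x u = f0 x + g x *v u"
    and f0_smooth: "smooth_on UNIV f0"
    and g_smooth: "smooth_on UNIV g"
    and X: "bounded X" "open X" "0 \<in> X"
    and U: "bounded U" "open U" "0 \<in> U" "convex U"
    and P: "bounded P" "open P" "0 \<in> P"
    and hbar: "hbar > 0"
    and phi_sol: "\<And>x0 u0. x0 \<in> X \<Longrightarrow> u0 \<in> U \<Longrightarrow>
        phi 0 x0 u0 = x0 \<and>
        (\<forall>t\<in>{0..hbar}. ((\<lambda>s. phi s x0 u0) has_vector_derivative f (phi t x0 u0) u0)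
                             (at t within {0..hbar}))"
    and phi_unique: "\<And>x0 u0 y. x0 \<in> X \<Longrightarrow> u0 \<in> U \<Longrightarrow> y 0 = x0 \<Longrightarrow>
        (\<forall>t\<in>{0..hbar}. (y has_vector_derivative f (y t) u0) (at t within {0..hbar})) \<Longrightarrow>
        \<forall>t\<in>{0..hbar}. y t = phi t x0 u0"
    and phi_smooth: "smooth_on ({0<..<hbar} \<times> X \<times> U) (\<lambda>(t, x, u). phi t x u)"
    and Q: "psd_matrix Q"
    and R: "pd_matrix R"
  shows "\<exists>h0>0. h0 \<le> hbar \<and>
           (\<forall>h. 0 < h \<and> h \<le> h0 \<longrightarrow>
              (\<forall>x\<in>X. \<forall>p\<in>P. convex_on U (\<lambda>u. hamiltonian phi Q R h x u p)))"
proof -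
  obtain rX where rX: "\<And>x. x \<in> X \<Longrightarrow> norm x \<le> rX" using X(1) by (auto simp: bounded_iff)
  obtain rU where rU: "\<And>u. u \<in> U \<Longrightarrow> norm u \<le> rU" using U(1) by (auto simp: bounded_iff)
  obtain rP where rP: "\<And>p. p \<in> P \<Longrightarrow> norm p \<le> rP" using P(1) by (auto simp: bounded_iff)
  have rU0: "0 \<le> rU" using rU[OF U(3)] by simp
  have rP0: "0 \<le> rP" using rP[OF P(3)] by simp
  define K where "K = cball (0::real^'n) (rX + 1)"
  have Kc: "compact K" "convex K" by (auto simp: K_def)
  obtain L0 where L0: "0 \<le> L0" "\<And>a. a\<in>K \<Longrightarrow> norm (f0 a) \<le> L0"
    "\<And>a b. a\<in>K \<Longrightarrow> b\<in>K \<Longrightarrow> norm (f0 a - f0 b) \<le> L0 * norm (a - b)"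
    "\<And>a b t. a\<in>K \<Longrightarrow> b\<in>K \<Longrightarrow> 0 \<le> t \<Longrightarrow> t \<le> 1 \<Longrightarrow>
       norm (f0 (a + t *\<^sub>R (b - a)) - (1 - t) *\<^sub>R f0 a - t *\<^sub>R f0 b) \<le> L0 * t * (1 - t) * (norm (b - a))^2"
    using smooth_C2[OF f0_smooth Kc] by blast
  obtain Lg where Lg: "0 \<le> Lg" "\<And>a. a\<in>K \<Longrightarrow> norm (g a) \<le> Lg"
    "\<And>a b. a\<in>K \<Longrightarrow> b\<in>K \<Longrightarrow> norm (g a - g b) \<le> Lg * norm (a - b)"
    "\<And>a b t. a\<in>K \<Longrightarrow> b\<in>K \<Longrightarrow> 0 \<le> t \<Longrightarrow> t \<le> 1 \<Longrightarrow>
       norm (g (a + t *\<^sub>R (b - a)) - (1 - t) *\<^sub>R g a - t *\<^sub>R g b) \<le> Lg * t * (1 - t) * (norm (b - a))^2"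
    using smooth_C2[OF g_smooth Kc] by blast
  define \<kappa> where "\<kappa> = real CARD('n) * real CARD('m)"
  have \<kappa>0: "0 \<le> \<kappa>" by (simp add: \<kappa>_def)
  have MV: "\<And>(M::real^'m^'n) v. norm (M *v v) \<le> \<kappa> * norm M * norm v"
    unfolding \<kappa>_def by (rule mat_vec_norm)
  obtain lam where lam: "0 < lam" "\<And>z. lam * (norm z)^2 \<le> z \<bullet> (R *v z)"
    using pd_lower[OF R] by blast
  define A where "A = L0 + \<kappa> * Lg * rU"
  have A0: "0 \<le> A" using L0(1) Lg(1) \<kappa>0 rU0 by (simp add: A_def)
  define c where "c = 2 * \<kappa> * Lg"
  have c0: "0 \<le> c" using \<kappa>0 Lg(1) by (simp add: c_def)
  define B where "B = L0 * c^2 + \<kappa> * Lg * rU * c^2 + \<kappa> * Lg * c"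
  have B0: "0 \<le> B" using L0(1) Lg(1) \<kappa>0 rU0 c0 by (simp add: B_def)
  define h0 where "h0 = min hbar (min 1 (min (1 / (2 * (A + 1))) (lam / (2 * B * rP + 1))))"
  have dpos: "0 < 2 * B * rP + 1" using B0 rP0 by (smt (verit) mult_nonneg_nonneg)
  then have "0 < lam / (2 * B * rP + 1)" using lam(1) by simp
  then have h0pos: "0 < h0" using hbar A0 by (simp add: h0_def)
  show ?thesis
  proof (intro exI conjI allI impI ballI)
    show "0 < h0" by (rule h0pos)
    show "h0 \<le> hbar" by (simp add: h0_def)
    fix h x p assume hh: "0 < h \<and> h \<le> h0" and x: "x \<in> X" and p: "p \<in> P"
    have h: "0 < h" "h \<le> hbar" "h \<le> 1" "h \<le> 1 / (2 * (A + 1))" "h \<le> lam / (2 * B * rP + 1)"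
      using hh by (auto simp: h0_def)
    have Ah: "A * h \<le> 1/2"
    proof -
      have "h * (2 * (A + 1)) \<le> 1" using h(4) A0 by (simp add: field_simps)
      then show ?thesis using h(1) A0 by (simp add: algebra_simps)
    qed
    have Ah1: "A * h < 1" using Ah by simp
    have sub: "{0..h} \<subseteq> {0..hbar}" using h by auto
    have der: "((\<lambda>s. phi s x u) has_vector_derivative f (phi s x u) u) (at s within {0..h})"
      if "u \<in> U" "s \<in> {0..h}" for u s
      using phi_sol[OF x that(1)] that(2) sub
      by (meson has_vector_derivative_within_subset subsetD)
    have phi0: "phi 0 x u = x" if "u \<in> U" for u using phi_sol[OF x that] by simp
    have fbnd: "norm (f y u) \<le> A" if "y \<in> K" "u \<in> U" for y u
    proof -
      have "norm (f y u) \<le> norm (f0 y) + norm (g y *v u)" unfolding f_affine by (rule norm_triangle_ineq)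
      also have "norm (g y *v u) \<le> \<kappa> * Lg * rU"
        using mv_bound[OF MV[of "g y" u] Lg(2)[OF that(1)] rU[OF that(2)] \<kappa>0] .
      finally show ?thesis using L0(2)[OF that(1)] by (simp add: A_def)
    qed
    have inK: "phi s x u \<in> K" if "u \<in> U" "s \<in> {0..h}" for u s
    proof -
      have "norm (phi s x u - phi 0 x u) \<le> 1"
      proof (rule stay_close[where F = "\<lambda>s. f (phi s x u) u" and M = A and T = h])
        show "0 \<le> h" using h by simp
        show "((\<lambda>s. phi s x u) has_vector_derivative f (phi s x u) u) (at s within {0..h})" if "s \<in> {0..h}" for s
          using der[OF \<open>u \<in> U\<close> that] .
        show "norm (f (phi s x u) u) \<le> A" if "s \<in> {0..h}" "norm (phi s x u - phi 0 x u) \<le> 1" for s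
        proof (rule fbnd[OF _ \<open>u \<in> U\<close>])
          have "norm (phi s x u) \<le> norm x + norm (phi s x u - x)" by (metis norm_triangle_sub)
          then show "phi s x u \<in> K" using that(2) rX[OF x] phi0[OF \<open>u \<in> U\<close>] by (simp add: K_def)
        qed
      qed (use Ah1 that in auto)
      then show ?thesis using rX[OF x] phi0[OF that(1)]
        by (simp add: K_def) (metis norm_triangle_sub add_mono order_trans)
    qed
    show "convex_on U (\<lambda>u. hamiltonian phi Q R h x u p)"
      unfolding convex_on_def
    proof (intro conjI ballI allI impI)
      show "convex U" by (rule U(4))
      fix u1 u2 and a b :: real
      assume u1: "u1 \<in> U" and u2: "u2 \<in> U" and a: "0 \<le> a" and b: "0 \<le> b" and ab: "a + b = 1"
      define uw where "uw = a *\<^sub>R u1 + b *\<^sub>R u2"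
      have uw: "uw \<in> U" using U(4) u1 u2 a b ab by (simp add: uw_def convex_def)
      define d where "d = u1 - u2"
      define e where "e = (\<lambda>s. phi s x u1 - phi s x u2)"
      have ebnd: "norm (e s) \<le> c * h * norm d" if s: "s \<in> {0..h}" for s
      proof -
        have "norm (e s) \<le> 2 * h * (\<kappa> * Lg * norm d)"
        proof (rule small_bound[where z' = "\<lambda>s. f (phi s x u1) u1 - f (phi s x u2) u2" and A = A])
          show "(e has_vector_derivative f (phi s x u1) u1 - f (phi s x u2) u2) (at s within {0..h})"
            if "s \<in> {0..h}" for s
            unfolding e_def using der[OF u1 that] der[OF u2 that] by (rule has_vector_derivative_diff)
          show "e 0 = 0" using phi0[OF u1] phi0[OF u2] by (simp add: e_def)
          show "norm (f (phi s x u1) u1 - f (phi s x u2) u2) \<le> A * norm (e s) + \<kappa> * Lg * norm d"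
            if "s \<in> {0..h}" for s
          proof -
            define y1 where "y1 = phi s x u1"
            define y2 where "y2 = phi s x u2"
            have y1: "y1 \<in> K" and y2: "y2 \<in> K" using inK u1 u2 that by (auto simp: y1_def y2_def)
            have "f y1 u1 - f y2 u2 = (f0 y1 - f0 y2) + (g y1 - g y2) *v u1 + g y2 *v (u1 - u2)"
              unfolding f_affine by (simp add: matrix_vector_mult_diff_rdistrib matrix_vector_mult_diff_distrib)
            then have "norm (f y1 u1 - f y2 u2) \<le> norm (f0 y1 - f0 y2) + norm ((g y1 - g y2) *v u1) + norm (g y2 *v (u1 - u2))"
              by (metis norm_add3)
            also have "\<dots> \<le> L0 * norm (y1 - y2) + \<kappa> * (Lg * norm (y1 - y2)) * rU + \<kappa> * Lg * norm d"
            proof (intro add_mono)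
              show "norm (f0 y1 - f0 y2) \<le> L0 * norm (y1 - y2)" by (rule L0(3)[OF y1 y2])
              show "norm ((g y1 - g y2) *v u1) \<le> \<kappa> * (Lg * norm (y1 - y2)) * rU"
                using mv_bound[OF MV[of "g y1 - g y2" u1] Lg(3)[OF y1 y2] rU[OF u1] \<kappa>0] by (simp add: mult.assoc)
              show "norm (g y2 *v (u1 - u2)) \<le> \<kappa> * Lg * norm d"
                using mv_bound[OF MV[of "g y2" "u1 - u2"] Lg(2)[OF y2] order_refl \<kappa>0] unfolding d_def .
            qed
            also have "\<dots> = A * norm (e s) + \<kappa> * Lg * norm d"
              by (simp add: A_def e_def y1_def y2_def algebra_simps)
            finally show ?thesis by (simp add: y1_def y2_def)
          qed
        qed (use h A0 Ah s in auto)
        then show ?thesis by (simp add: c_def algebra_simps)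
      qed
      define D where "D = (\<lambda>s. phi s x uw - a *\<^sub>R phi s x u1 - b *\<^sub>R phi s x u2)"
      have Dbnd: "norm (D h) \<le> 2 * h * (a * b * h * (norm d)^2 * B)"
      proof (rule small_bound[where z' = "\<lambda>s. f (phi s x uw) uw - a *\<^sub>R f (phi s x u1) u1 - b *\<^sub>R f (phi s x u2) u2" and A = A])
        show "(D has_vector_derivative f (phi s x uw) uw - a *\<^sub>R f (phi s x u1) u1 - b *\<^sub>R f (phi s x u2) u2) (at s within {0..h})"
          if "s \<in> {0..h}" for s
          unfolding D_def using der[OF uw that] der[OF u1 that] der[OF u2 that]
          by (intro has_vector_derivative_diff hvd_cmul) auto
        show "D 0 = 0" using phi0[OF u1] phi0[OF u2] phi0[OF uw] ab
          by (simp add: D_def algebra_simps flip: scaleR_add_left)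
        show "norm (f (phi s x uw) uw - a *\<^sub>R f (phi s x u1) u1 - b *\<^sub>R f (phi s x u2) u2)
              \<le> A * norm (D s) + a * b * h * (norm d)^2 * B"
          if s: "s \<in> {0..h}" for s
        proof -
          define y1 where "y1 = phi s x u1"
          define y2 where "y2 = phi s x u2"
          define yw where "yw = phi s x uw"
          define yb where "yb = y1 + b *\<^sub>R (y2 - y1)"
          have y1: "y1 \<in> K" and y2: "y2 \<in> K" and yw: "yw \<in> K"
            using inK u1 u2 uw s by (auto simp: y1_def y2_def yw_def)
          have ybeq: "yb = a *\<^sub>R y1 + b *\<^sub>R y2" using ab by (simp add: yb_def algebra_simps flip: scaleR_add_left)
          have yb: "yb \<in> K" using Kc(2) y1 y2 a b ab unfolding ybeq by (simp add: convex_def)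
          have Ds: "D s = yw - yb" by (simp add: D_def ybeq y1_def y2_def yw_def)
          have es: "norm (y2 - y1) = norm (e s)" by (simp add: e_def y1_def y2_def norm_minus_commute)
          have b1: "b \<le> 1" "1 - b = a" using a ab by auto
          have "f yw uw - a *\<^sub>R f y1 u1 - b *\<^sub>R f y2 u2
            = (f0 yw - f0 yb) + (f0 yb - a *\<^sub>R f0 y1 - b *\<^sub>R f0 y2) + (g yw - g yb) *v uw
              + (g yb - a *\<^sub>R g y1 - b *\<^sub>R g y2) *v uw + (a * b) *\<^sub>R ((g y2 - g y1) *v (u1 - u2))"
            unfolding f_affine uw_def by (rule decomp_identity[OF ab])
          then have "norm (f yw uw - a *\<^sub>R f y1 u1 - b *\<^sub>R f y2 u2)
            \<le> norm (f0 yw - f0 yb) + norm (f0 yb - a *\<^sub>R f0 y1 - b *\<^sub>R f0 y2) + norm ((g yw - g yb) *v uw)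
              + norm ((g yb - a *\<^sub>R g y1 - b *\<^sub>R g y2) *v uw) + norm ((a * b) *\<^sub>R ((g y2 - g y1) *v (u1 - u2)))"
            by (metis norm_add5)
          also have "\<dots> \<le> L0 * norm (D s) + L0 * b * a * (norm (e s))^2 + \<kappa> * (Lg * norm (D s)) * rU
              + \<kappa> * (Lg * b * a * (norm (e s))^2) * rU + a * b * (\<kappa> * (Lg * norm (e s)) * norm d)"
          proof (intro add_mono)
            show "norm (f0 yw - f0 yb) \<le> L0 * norm (D s)" using L0(3)[OF yw yb] Ds by simp
            show "norm (f0 yb - a *\<^sub>R f0 y1 - b *\<^sub>R f0 y2) \<le> L0 * b * a * (norm (e s))^2"
              using L0(4)[OF y1 y2 b b1(1)] unfolding yb_def b1(2) es .
            show "norm ((g yw - g yb) *v uw) \<le> \<kappa> * (Lg * norm (D s)) * rU"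
              using mv_bound[OF MV[of "g yw - g yb" uw] Lg(3)[OF yw yb] rU[OF uw] \<kappa>0] Ds by (simp add: mult.assoc)
            have gd: "norm (g yb - a *\<^sub>R g y1 - b *\<^sub>R g y2) \<le> Lg * b * a * (norm (e s))^2"
              using Lg(4)[OF y1 y2 b b1(1)] unfolding yb_def b1(2) es .
            show "norm ((g yb - a *\<^sub>R g y1 - b *\<^sub>R g y2) *v uw) \<le> \<kappa> * (Lg * b * a * (norm (e s))^2) * rU"
              using mv_bound[OF MV[of "g yb - a *\<^sub>R g y1 - b *\<^sub>R g y2" uw] gd rU[OF uw] \<kappa>0] .
            have "norm ((g y2 - g y1) *v (u1 - u2)) \<le> \<kappa> * (Lg * norm (e s)) * norm d"
              using mv_bound[OF MV[of "g y2 - g y1" "u1 - u2"] Lg(3)[OF y2 y1] order_refl \<kappa>0] es unfolding d_def by (simp add: norm_minus_commute)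
            then show "norm ((a * b) *\<^sub>R ((g y2 - g y1) *v (u1 - u2))) \<le> a * b * (\<kappa> * (Lg * norm (e s)) * norm d)"
              using a b by (simp add: mult_left_mono)
          qed
          also have "\<dots> = A * norm (D s) + a * b * (L0 * (norm (e s))^2 + \<kappa> * Lg * rU * (norm (e s))^2 + \<kappa> * Lg * (norm (e s) * norm d))"
            by (simp add: A_def algebra_simps)
          also have "\<dots> \<le> A * norm (D s) + a * b * (h * (norm d)^2 * B)"
          proof -
            have en: "norm (e s) \<le> c * h * norm d" by (rule ebnd[OF s])
            have e2: "(norm (e s))^2 \<le> c^2 * h * (norm d)^2"
            proof -
              have "(norm (e s))^2 \<le> (c * h * norm d)^2" using en by (intro power_mono) auto
              also have "\<dots> = c^2 * (h * h) * (norm d)^2" by (simp add: power2_eq_square algebra_simps)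
              also have "\<dots> \<le> c^2 * h * (norm d)^2"
                using h by (intro mult_right_mono mult_left_mono) (auto simp: mult_le_cancel_left1)
              finally show ?thesis .
            qed
            have e1: "norm (e s) * norm d \<le> c * h * (norm d)^2"
            proof -
              have "norm (e s) * norm d \<le> (c * h * norm d) * norm d" using en by (rule mult_right_mono) simp
              then show ?thesis by (simp add: power2_eq_square mult.assoc)
            qed
            have "L0 * (norm (e s))^2 + \<kappa> * Lg * rU * (norm (e s))^2 + \<kappa> * Lg * (norm (e s) * norm d)
                \<le> L0 * (c^2 * h * (norm d)^2) + \<kappa> * Lg * rU * (c^2 * h * (norm d)^2) + \<kappa> * Lg * (c * h * (norm d)^2)"
              using L0(1) Lg(1) \<kappa>0 rU0 e1 e2 by (intro add_mono mult_left_mono) auto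
            also have "\<dots> = h * (norm d)^2 * B" by (simp add: B_def algebra_simps)
            finally show ?thesis using a b by (intro add_left_mono mult_left_mono) auto
          qed
          finally show ?thesis by (simp add: y1_def y2_def yw_def algebra_simps)
        qed
      qed (use h A0 Ah in auto)
      have Hdiff: "hamiltonian phi Q R h x uw p - (a * hamiltonian phi Q R h x u1 p + b * hamiltonian phi Q R h x u2 p)
          = D h \<bullet> p - h * (a * b * (d \<bullet> (R *v d)))"
      proof -
        have hq: "h * (x \<bullet> (Q *v x)) = a * (h * (x \<bullet> (Q *v x))) + b * (h * (x \<bullet> (Q *v x)))"
          by (metis ab distrib_right mult_1)
        show ?thesis
          unfolding hamiltonian_def D_def d_def uw_def quad_identity[OF ab]
          by (simp add: inner_diff_left algebra_simps) (use hq in linarith)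
      qed
      have "D h \<bullet> p \<le> norm (D h) * norm p" by (rule norm_cauchy_schwarz)
      also have "\<dots> \<le> (2 * h * (a * b * h * (norm d)^2 * B)) * rP"
        using Dbnd rP[OF p] B0 a b h(1) by (intro mult_mono) auto
      also have "\<dots> = (a * b * (norm d)^2) * h * (2 * h * B * rP)" by (simp add: algebra_simps)
      also have "\<dots> \<le> (a * b * (norm d)^2) * h * lam"
      proof -
        have "h * (2 * B * rP + 1) \<le> lam" using h(5) dpos by (simp add: le_divide_eq)
        then have "2 * h * B * rP \<le> lam" using h(1) by (simp add: algebra_simps)
        then show ?thesis using a b h(1) by (intro mult_left_mono) auto
      qed
      also have "\<dots> \<le> h * (a * b * (d \<bullet> (R *v d)))"
      proof -
        have "(a * b) * (lam * (norm d)^2) \<le> (a * b) * (d \<bullet> (R *v d))"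
          using lam(2)[of d] a b by (intro mult_left_mono) auto
        then have "h * ((a * b) * (lam * (norm d)^2)) \<le> h * ((a * b) * (d \<bullet> (R *v d)))"
          by (rule mult_left_mono) (use h(1) in auto)
        then show ?thesis by (simp add: algebra_simps)
      qed
      finally have "D h \<bullet> p - h * (a * b * (d \<bullet> (R *v d))) \<le> 0" by simp
      then show "hamiltonian phi Q R h x (a *\<^sub>R u1 + b *\<^sub>R u2) p
          \<le> a * hamiltonian phi Q R h x u1 p + b * hamiltonian phi Q R h x u2 p"
        using Hdiff unfolding uw_def by simp
    qed
  qed
qed

end
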